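(* Let $f:\mathbb{Z}^n\to\mathbb{R}\cup\{+\infty\}$ be a function satisfying condition (SSQM$^\natural$) with $\arg\min f\neq\emptyset$. Then Algorithm BasicSteepestDescent applied to $f$ finds a minimizer of $f$ in a finite number of iterations.
   Context: $N=\{1,\dots,n\}$. For $i\in N$, $\chi_i\in\{0,1\}^n$ is the characteristic vector of $i$, and $\chi_0=0$. $\mathrm{dom}\,f=\{x\in\mathbb{Z}^n\mid f(x)<+\infty\}$. For $x,y\in\mathbb{Z}^n$, $\mathrm{supp}^+(x-y)=\{i\in N\mid x(i)>y(i)\}$ and $\mathrm{supp}^-(x-y)=\{j\in N\mid x(j)<y(j)\}$. Condition (SSQM$^\natural$): for all $x,y\in\mathrm{dom}\,f$ and all $i\in\mathrm{supp}^+(x-y)$ there exists $j\in\mathrm{supp}^-(x-y)\cup\{0\}$ such that at least one of the following holds: (a) $f(x-\chi_i+\chi_j)<f(x)$; (b) $f(y+\chi_i-\chi_j)<f(y)$; (c) $f(x-\chi_i+\chi_j)=f(x)$ and $f(y+\chi_i-\chi_j)=f(y)$. Algorithm BasicSteepestDescent: Step 0: choose an arbitrary $x_0\in\mathrm{dom}\,f$ and set $x:=x_0$. Step 1: if $f(x-\chi_i+\chi_j)\ge f(x)$ for every $i,j\in N\cup\{0\}$, output $x$ and stop. Step 2: find $i,j\in N\cup\{0\}$ minimizing $f(x-\chi_i+\chi_j)$. Step 3: set $x:=x-\chi_i+\chi_j$ and go to Step 1. *)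

theory Defs
  imports Main "HOL-Library.Extended_Real"
begin

text \<open>Points of Z^n are functions from a finite index type 'n (playing the role of
  N = {1..n}) to int. Indices in N \<union> {0} are represented as 'n option, with None = 0.\<close>

definition chi :: "'n option \<Rightarrow> ('n \<Rightarrow> int)" where
  "chi i = (\<lambda>k. if i = Some k then 1 else 0)"

definition move :: "('n \<Rightarrow> int) \<Rightarrow> 'n option \<Rightarrow> 'n option \<Rightarrow> ('n \<Rightarrow> int)" where
  "move x i j = (\<lambda>k. x k - chi i k + chi j k)"

definition domf :: "(('n \<Rightarrow> int) \<Rightarrow> ereal) \<Rightarrow> ('n \<Rightarrow> int) set" where
  "domf f = {x. f x < \<infinity>}"

definition SSQM_nat :: "(('n \<Rightarrow> int) \<Rightarrow> ereal) \<Rightarrow> bool" where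
  "SSQM_nat f \<longleftrightarrow>
    (\<forall>x\<in>domf f. \<forall>y\<in>domf f. \<forall>i. x i > y i \<longrightarrow>
      (\<exists>j. (j = None \<or> (\<exists>j'. j = Some j' \<and> x j' < y j')) \<and>
        (f (move x (Some i) j) < f x
         \<or> f (move y j (Some i)) < f y
         \<or> (f (move x (Some i) j) = f x \<and> f (move y j (Some i)) = f y))))"

definition bsd_stop :: "(('n \<Rightarrow> int) \<Rightarrow> ereal) \<Rightarrow> ('n \<Rightarrow> int) \<Rightarrow> bool" where
  "bsd_stop f x \<longleftrightarrow> (\<forall>i j. f (move x i j) \<ge> f x)"

definition bsd_step :: "(('n \<Rightarrow> int) \<Rightarrow> ereal) \<Rightarrow> ('n \<Rightarrow> int) \<Rightarrow> ('n \<Rightarrow> int) \<Rightarrow> bool" where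
  "bsd_step f x x' \<longleftrightarrow> \<not> bsd_stop f x \<and>
     (\<exists>i j. x' = move x i j \<and> (\<forall>i' j'. f (move x i j) \<le> f (move x i' j')))"

definition is_minimizer :: "(('n \<Rightarrow> int) \<Rightarrow> ereal) \<Rightarrow> ('n \<Rightarrow> int) \<Rightarrow> bool" where
  "is_minimizer f x \<longleftrightarrow> (\<forall>y. f x \<le> f y)"

end

theory Submission
  imports Defs
begin

definition NN :: "('n::finite \<Rightarrow> int) \<Rightarrow> int" where
  "NN w = (\<Sum>k\<in>UNIV. \<bar>w k\<bar>)"

definition dd :: "('n::finite \<Rightarrow> int) \<Rightarrow> ('n \<Rightarrow> int) \<Rightarrow> int" where
  "dd x y = NN (\<lambda>k. x k - y k)"

lemma NN_one:
  fixes a b :: "'n::finite \<Rightarrow> int"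
  assumes "\<forall>k. k \<noteq> p \<longrightarrow> a k = b k"
  shows "NN a = NN b - \<bar>b p\<bar> + \<bar>a p\<bar>"
proof -
  have 1: "NN a = \<bar>a p\<bar> + (\<Sum>k\<in>UNIV-{p}. \<bar>a k\<bar>)"
    unfolding NN_def by (rule sum.remove) auto
  have 2: "NN b = \<bar>b p\<bar> + (\<Sum>k\<in>UNIV-{p}. \<bar>b k\<bar>)"
    unfolding NN_def by (rule sum.remove) auto
  have "(\<Sum>k\<in>UNIV-{p}. \<bar>a k\<bar>) = (\<Sum>k\<in>UNIV-{p}. \<bar>b k\<bar>)"
    using assms by (intro sum.cong) auto
  with 1 2 show ?thesis by simp
qed

lemma NN_two:
  fixes a b :: "'n::finite \<Rightarrow> int"
  assumes "\<forall>k. k \<noteq> p \<longrightarrow> k \<noteq> q \<longrightarrow> a k = b k" and "p \<noteq> q"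
  shows "NN a = NN b - \<bar>b p\<bar> - \<bar>b q\<bar> + \<bar>a p\<bar> + \<bar>a q\<bar>"
proof -
  define c where "c = a(q := b q)"
  have "NN c = NN b - \<bar>b p\<bar> + \<bar>c p\<bar>"
    by (rule NN_one) (use assms in \<open>auto simp: c_def\<close>)
  moreover have "NN a = NN c - \<bar>c q\<bar> + \<bar>a q\<bar>"
    by (rule NN_one) (auto simp: c_def)
  ultimately show ?thesis using assms(2) by (simp add: c_def)
qed

lemma NN_nonneg: "NN w \<ge> 0"
  unfolding NN_def by (simp add: sum_nonneg)

lemma move_same[simp]: "move x a a = x"
  by (rule ext) (simp add: move_def)

lemma move_val: "move x a b k = x k - (if a = Some k then 1 else 0) + (if b = Some k then 1 else 0)"
  by (simp add: move_def chi_def)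

lemma move_move1: "move (move x (Some p) j) k (Some p) = move x k j"
  by (rule ext) (simp add: move_def chi_def)

lemma move_move2: "move (move x i (Some q)) (Some q) k = move x i k"
  by (rule ext) (simp add: move_def chi_def)

lemma nearest_ex:
  assumes "P (y0::'n::finite \<Rightarrow> int)"
  shows "\<exists>y. P y \<and> (\<forall>z. P z \<longrightarrow> dd x y \<le> dd x z)"
proof -
  obtain y where "P y" "\<forall>z. P z \<longrightarrow> nat (dd x y) \<le> nat (dd x z)"
    using ex_has_least_nat[of P y0 "\<lambda>y. nat (dd x y)"] assms by blast
  then show ?thesis using NN_nonneg unfolding dd_def by (metis nat_le_eq_zle)
qed

lemma dd_one:
  assumes "\<forall>k. k \<noteq> p \<longrightarrow> x2 k - y2 k = x k - y k"
  shows "dd x2 y2 = dd x y - \<bar>x p - y p\<bar> + \<bar>x2 p - y2 p\<bar>"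
  unfolding dd_def by (rule NN_one) (use assms in auto)

lemma dd_two:
  assumes "\<forall>k. k \<noteq> p \<longrightarrow> k \<noteq> q \<longrightarrow> x2 k - y2 k = x k - y k" and "p \<noteq> q"
  shows "dd x2 y2 = dd x y - \<bar>x p - y p\<bar> - \<bar>x q - y q\<bar> + \<bar>x2 p - y2 p\<bar> + \<bar>x2 q - y2 q\<bar>"
  unfolding dd_def by (rule NN_two) (use assms in auto)

lemma min_dom: "is_minimizer f z \<Longrightarrow> x \<in> domf f \<Longrightarrow> z \<in> domf f"
  unfolding is_minimizer_def domf_def by (meson le_less_trans mem_Collect_eq)

lemma local_global:
  fixes f :: "('n::finite \<Rightarrow> int) \<Rightarrow> ereal"
  assumes ssqm: "SSQM_nat f" and xd: "x \<in> domf f" and stop: "bsd_stop f x"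
    and ex: "is_minimizer f y0"
  shows "is_minimizer f x"
proof (rule ccontr)
  assume nm: "\<not> is_minimizer f x"
  obtain xs where xs: "is_minimizer f xs" "\<forall>z. is_minimizer f z \<longrightarrow> dd x xs \<le> dd x z"
    using nearest_ex[of "is_minimizer f", OF ex] by blast
  have xsd: "xs \<in> domf f" using min_dom xs(1) xd by blast
  have "x \<noteq> xs" using nm xs by auto
  then obtain p where "x p \<noteq> xs p" by auto
  then consider "x p > xs p" | "x p < xs p" by linarith
  then show False
  proof cases
    case 1
    from ssqm[unfolded SSQM_nat_def, rule_format, OF xd xsd 1] obtain j where
      j: "j = None \<or> (\<exists>j'. j = Some j' \<and> x j' < xs j')" and
      h: "f (move x (Some p) j) < f x \<or> f (move xs j (Some p)) < f xs \<or>
          (f (move x (Some p) j) = f x \<and> f (move xs j (Some p)) = f xs)" by blast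
    have a: "\<not> f (move x (Some p) j) < f x" using stop by (simp add: bsd_stop_def not_less)
    have b: "\<not> f (move xs j (Some p)) < f xs" using xs(1) by (simp add: is_minimizer_def not_less)
    have zm: "is_minimizer f (move xs j (Some p))" using h a b xs(1) by (auto simp: is_minimizer_def)
    have "dd x (move xs j (Some p)) < dd x xs"
      using j
    proof
      assume jN: "j = None"
      have e: "dd x (move xs j (Some p)) = dd x xs - \<bar>x p - xs p\<bar> + \<bar>x p - move xs j (Some p) p\<bar>"
        by (rule dd_one) (auto simp: jN move_val)
      show ?thesis using e 1 by (simp add: jN move_val)
    next
      assume "\<exists>j'. j = Some j' \<and> x j' < xs j'"
      then obtain q where q: "j = Some q" "x q < xs q" by blast
      then have qp: "q \<noteq> p" using 1 by auto
      have e: "dd x (move xs j (Some p)) = dd x xs - \<bar>x p - xs p\<bar> - \<bar>x q - xs q\<bar>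
          + \<bar>x p - move xs j (Some p) p\<bar> + \<bar>x q - move xs j (Some p) q\<bar>"
        by (rule dd_two) (use qp in \<open>auto simp: q move_val\<close>)
      show ?thesis using e 1 q qp by (simp add: move_val)
    qed
    then show False using xs(2) zm by fastforce
  next
    case 2
    from ssqm[unfolded SSQM_nat_def, rule_format, OF xsd xd 2] obtain j where
      j: "j = None \<or> (\<exists>j'. j = Some j' \<and> xs j' < x j')" and
      h: "f (move xs (Some p) j) < f xs \<or> f (move x j (Some p)) < f x \<or>
          (f (move xs (Some p) j) = f xs \<and> f (move x j (Some p)) = f x)" by blast
    have a: "\<not> f (move x j (Some p)) < f x" using stop by (simp add: bsd_stop_def not_less)
    have b: "\<not> f (move xs (Some p) j) < f xs" using xs(1) by (simp add: is_minimizer_def not_less)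
    have zm: "is_minimizer f (move xs (Some p) j)" using h a b xs(1) by (auto simp: is_minimizer_def)
    have "dd x (move xs (Some p) j) < dd x xs"
      using j
    proof
      assume jN: "j = None"
      have e: "dd x (move xs (Some p) j) = dd x xs - \<bar>x p - xs p\<bar> + \<bar>x p - move xs (Some p) j p\<bar>"
        by (rule dd_one) (auto simp: jN move_val)
      show ?thesis using e 2 by (simp add: jN move_val)
    next
      assume "\<exists>j'. j = Some j' \<and> xs j' < x j'"
      then obtain q where q: "j = Some q" "xs q < x q" by blast
      then have qp: "q \<noteq> p" using 2 by auto
      have e: "dd x (move xs (Some p) j) = dd x xs - \<bar>x p - xs p\<bar> - \<bar>x q - xs q\<bar>
          + \<bar>x p - move xs (Some p) j p\<bar> + \<bar>x q - move xs (Some p) j q\<bar>"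
        by (rule dd_two) (use qp in \<open>auto simp: q move_val\<close>)
      show ?thesis using e 2 q qp by (simp add: move_val)
    qed
    then show False using xs(2) zm by fastforce
  qed
qed


lemma key:
  fixes f :: "('n::finite \<Rightarrow> int) \<Rightarrow> ereal"
  assumes ssqm: "SSQM_nat f" and xd: "x \<in> domf f" and st: "bsd_step f x x'"
    and ex: "is_minimizer f y0"
  shows "\<exists>z. is_minimizer f z \<and> (\<forall>y. is_minimizer f y \<longrightarrow> dd x' z < dd x y)"
proof -
  from st obtain i j where x': "x' = move x i j"
    and S: "\<forall>i' j'. f (move x i j) \<le> f (move x i' j')" and ns: "\<not> bsd_stop f x"
    unfolding bsd_step_def by blast
  define \<alpha> where "\<alpha> = f x'"
  have S': "\<And>a b. \<alpha> \<le> f (move x a b)" using S x' \<alpha>_def by auto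
  have lt: "\<alpha> < f x" using ns S' unfolding bsd_stop_def by (meson not_le order_le_less_trans)
  have x'd: "x' \<in> domf f" using lt xd by (auto simp: domf_def \<alpha>_def)
  have ij: "i \<noteq> j" using lt x' \<alpha>_def by auto
  define P where "P y = (is_minimizer f y \<and> (\<forall>z. is_minimizer f z \<longrightarrow> dd x y \<le> dd x z))" for y
  obtain y1 where "P y1" using nearest_ex[of "is_minimizer f", OF ex, of x] P_def by auto
  then obtain xs where xsP: "P xs" and xsmin: "\<forall>z. P z \<longrightarrow> dd x' xs \<le> dd x' z"
    using nearest_ex[of P y1 x'] by blast
  have xsm: "is_minimizer f xs" and xsn: "\<And>z. is_minimizer f z \<Longrightarrow> dd x xs \<le> dd x z"
    using xsP P_def by auto
  have xsd: "xs \<in> domf f" using min_dom xsm xd by blast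
  have near: "\<And>z. is_minimizer f z \<Longrightarrow> dd x z \<le> dd x xs \<Longrightarrow> dd x' xs \<le> dd x' z"
  proof -
    fix z assume "is_minimizer f z" "dd x z \<le> dd x xs"
    then have "P z" using xsn unfolding P_def by (meson order_trans)
    then show "dd x' xs \<le> dd x' z" using xsmin by blast
  qed
  have claimI: "xs p = x p \<and> (\<exists>q. j = Some q) \<and> f (move x None j) = \<alpha>
      \<and> is_minimizer f (move xs (Some p) None)" if ip: "i = Some p" and ge: "xs p \<ge> x p" for p
  proof -
    have jp: "j \<noteq> Some p" using ij ip by auto
    have x'p: "x' p = x p - 1" using x' ip jp by (auto simp: move_val)
    have x'o: "\<And>r. r \<noteq> p \<Longrightarrow> j \<noteq> Some r \<Longrightarrow> x' r = x r" using x' ip by (auto simp: move_val)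
    have gt: "xs p > x' p" using x'p ge by simp
    from ssqm[unfolded SSQM_nat_def, rule_format, OF xsd x'd gt] obtain k where
      k: "k = None \<or> (\<exists>k'. k = Some k' \<and> xs k' < x' k')" and
      h: "f (move xs (Some p) k) < f xs \<or> f (move x' k (Some p)) < f x' \<or>
          (f (move xs (Some p) k) = f xs \<and> f (move x' k (Some p)) = f x')" by blast
    have mm: "move x' k (Some p) = move x k j" using x' ip move_move1 by simp
    have a: "\<not> f (move xs (Some p) k) < f xs" using xsm by (simp add: is_minimizer_def not_less)
    have b: "\<not> f (move x k j) < \<alpha>" using S' not_less by blast
    have c: "f (move x k j) = \<alpha>" and zm: "is_minimizer f (move xs (Some p) k)"
      using h a b mm \<alpha>_def xsm by (auto simp: is_minimizer_def)
    have kj: "k \<noteq> j" using c lt by auto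
    define z where "z = move xs (Some p) k"
    have zm': "is_minimizer f z" using zm z_def by simp
    show ?thesis using k
    proof
      assume kN: "k = None"
      have e1: "dd x z = dd x xs - \<bar>x p - xs p\<bar> + \<bar>x p - z p\<bar>"
        by (rule dd_one) (auto simp: z_def kN move_val)
      have e2: "dd x' z = dd x' xs - \<bar>x' p - xs p\<bar> + \<bar>x' p - z p\<bar>"
        by (rule dd_one) (auto simp: z_def kN move_val)
      have zp: "z p = xs p - 1" by (simp add: z_def kN move_val)
      have "\<not> dd x z \<le> dd x xs"
      proof
        assume "dd x z \<le> dd x xs"
        then have "dd x' xs \<le> dd x' z" using near zm' by auto
        then show False using e2 zp x'p ge by arith
      qed
      hence "xs p = x p" using e1 zp ge by arith
      moreover have "\<exists>q. j = Some q" using kj kN by (cases j) auto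
      ultimately show ?thesis using c kN zm by auto
    next
      assume "\<exists>k'. k = Some k' \<and> xs k' < x' k'"
      then obtain r where r: "k = Some r" "xs r < x' r" by blast
      have rp: "r \<noteq> p" using r x'p ge by auto
      have rj: "j \<noteq> Some r" using kj r by auto
      have x'r: "x' r = x r" using x'o rp rj by auto
      have e1: "dd x z = dd x xs - \<bar>x p - xs p\<bar> - \<bar>x r - xs r\<bar> + \<bar>x p - z p\<bar> + \<bar>x r - z r\<bar>"
        by (rule dd_two) (use rp in \<open>auto simp: z_def r move_val\<close>)
      have e2: "dd x' z = dd x' xs - \<bar>x' p - xs p\<bar> - \<bar>x' r - xs r\<bar> + \<bar>x' p - z p\<bar> + \<bar>x' r - z r\<bar>"
        by (rule dd_two) (use rp in \<open>auto simp: z_def r move_val\<close>)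
      have zp: "z p = xs p - 1" using rp by (simp add: z_def r move_val)
      have zr: "z r = xs r + 1" using rp by (simp add: z_def r move_val)
      have "dd x z \<le> dd x xs" using e1 zp zr ge r x'r by arith
      hence "dd x' xs \<le> dd x' z" using near zm' by auto
      then show ?thesis using e2 zp zr x'p ge r x'r by arith
    qed
  qed
  have claimJ: "xs q = x q \<and> (\<exists>p. i = Some p) \<and> f (move x i None) = \<alpha>
      \<and> is_minimizer f (move xs None (Some q))" if jq: "j = Some q" and le: "xs q \<le> x q" for q
  proof -
    have iq: "i \<noteq> Some q" using ij jq by auto
    have x'q: "x' q = x q + 1" using x' jq iq by (auto simp: move_val)
    have x'o: "\<And>r. r \<noteq> q \<Longrightarrow> i \<noteq> Some r \<Longrightarrow> x' r = x r" using x' jq by (auto simp: move_val)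
    have gt: "x' q > xs q" using x'q le by simp
    from ssqm[unfolded SSQM_nat_def, rule_format, OF x'd xsd gt] obtain k where
      k: "k = None \<or> (\<exists>k'. k = Some k' \<and> x' k' < xs k')" and
      h: "f (move x' (Some q) k) < f x' \<or> f (move xs k (Some q)) < f xs \<or>
          (f (move x' (Some q) k) = f x' \<and> f (move xs k (Some q)) = f xs)" by blast
    have mm: "move x' (Some q) k = move x i k" using x' jq move_move2 by simp
    have a: "\<not> f (move xs k (Some q)) < f xs" using xsm by (simp add: is_minimizer_def not_less)
    have b: "\<not> f (move x i k) < \<alpha>" using S' not_less by blast
    have c: "f (move x i k) = \<alpha>" and zm: "is_minimizer f (move xs k (Some q))"
      using h a b mm \<alpha>_def xsm by (auto simp: is_minimizer_def)
    have ki: "k \<noteq> i" using c lt by auto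
    define z where "z = move xs k (Some q)"
    have zm': "is_minimizer f z" using zm z_def by simp
    show ?thesis using k
    proof
      assume kN: "k = None"
      have e1: "dd x z = dd x xs - \<bar>x q - xs q\<bar> + \<bar>x q - z q\<bar>"
        by (rule dd_one) (auto simp: z_def kN move_val)
      have e2: "dd x' z = dd x' xs - \<bar>x' q - xs q\<bar> + \<bar>x' q - z q\<bar>"
        by (rule dd_one) (auto simp: z_def kN move_val)
      have zq: "z q = xs q + 1" by (simp add: z_def kN move_val)
      have "\<not> dd x z \<le> dd x xs"
      proof
        assume "dd x z \<le> dd x xs"
        then have "dd x' xs \<le> dd x' z" using near zm' by auto
        then show False using e2 zq x'q le by arith
      qed
      hence "xs q = x q" using e1 zq le by arith
      moreover have "\<exists>p. i = Some p" using ki kN by (cases i) auto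
      ultimately show ?thesis using c kN zm by auto
    next
      assume "\<exists>k'. k = Some k' \<and> x' k' < xs k'"
      then obtain r where r: "k = Some r" "x' r < xs r" by blast
      have rq: "r \<noteq> q" using r x'q le by auto
      have ri: "i \<noteq> Some r" using ki r by auto
      have x'r: "x' r = x r" using x'o rq ri by auto
      have e1: "dd x z = dd x xs - \<bar>x q - xs q\<bar> - \<bar>x r - xs r\<bar> + \<bar>x q - z q\<bar> + \<bar>x r - z r\<bar>"
        by (rule dd_two) (use rq in \<open>auto simp: z_def r move_val\<close>)
      have e2: "dd x' z = dd x' xs - \<bar>x' q - xs q\<bar> - \<bar>x' r - xs r\<bar> + \<bar>x' q - z q\<bar> + \<bar>x' r - z r\<bar>"
        by (rule dd_two) (use rq in \<open>auto simp: z_def r move_val\<close>)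
      have zq: "z q = xs q + 1" using rq by (simp add: z_def r move_val)
      have zr: "z r = xs r - 1" using rq by (simp add: z_def r move_val)
      have "dd x z \<le> dd x xs" using e1 zq zr le r x'r by arith
      hence "dd x' xs \<le> dd x' z" using near zm' by auto
      then show ?thesis using e2 zq zr x'q le r x'r by arith
    qed
  qed
  have bothbad: False if ip: "i = Some p" and jq: "j = Some q"
      and fB: "f (move x None (Some q)) = \<alpha>" and fA: "f (move x (Some p) None) = \<alpha>" for p q
  proof -
    define B where "B = move x None (Some q)"
    define A where "A = move x (Some p) None"
    have pq: "p \<noteq> q" using ij ip jq by auto
    have Bd: "B \<in> domf f" using fB lt xd by (auto simp: domf_def B_def)
    have Ad: "A \<in> domf f" using fA lt xd by (auto simp: domf_def A_def)
    have gt: "B p > A p" using pq by (simp add: A_def B_def move_val)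
    from ssqm[unfolded SSQM_nat_def, rule_format, OF Bd Ad gt] obtain k where
      k: "k = None \<or> (\<exists>k'. k = Some k' \<and> B k' < A k')" and
      h: "f (move B (Some p) k) < f B \<or> f (move A k (Some p)) < f A \<or>
          (f (move B (Some p) k) = f B \<and> f (move A k (Some p)) = f A)" by blast
    have kN: "k = None" using k by (auto simp: A_def B_def move_val split: if_splits)
    have e1: "move B (Some p) None = x'" by (rule ext) (simp add: B_def x' ip jq move_def chi_def)
    have e2: "move A None (Some p) = x" by (rule ext) (simp add: A_def move_def chi_def)
    show False using h kN e1 e2 fA fB \<alpha>_def lt B_def A_def by auto
  qed
  have goal: "\<exists>z. is_minimizer f z \<and> dd x' z < dd x xs"
  proof (cases i)
    case None
    then obtain q where jq: "j = Some q" using ij by (cases j) auto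
    have "\<not> xs q \<le> x q" using claimJ[OF jq] None by auto
    moreover have "dd x' xs = dd x xs - \<bar>x q - xs q\<bar> + \<bar>x' q - xs q\<bar>"
      by (rule dd_one) (auto simp: x' None jq move_val)
    moreover have "x' q = x q + 1" by (simp add: x' None jq move_val)
    ultimately show ?thesis using xsm by (intro exI[of _ xs]) arith
  next
    case (Some p)
    show ?thesis
    proof (cases j)
      case None
      have "\<not> xs p \<ge> x p" using claimI[OF Some] None by auto
      moreover have "dd x' xs = dd x xs - \<bar>x p - xs p\<bar> + \<bar>x' p - xs p\<bar>"
        by (rule dd_one) (auto simp: x' None Some move_val)
      moreover have "x' p = x p - 1" by (simp add: x' None Some move_val)
      ultimately show ?thesis using xsm by (intro exI[of _ xs]) arith
    next
      case jq: (Some q)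
      have pq: "p \<noteq> q" using ij Some jq by auto
      have x'p: "x' p = x p - 1" using pq by (simp add: x' Some jq move_val)
      have x'q: "x' q = x q + 1" using pq by (simp add: x' Some jq move_val)
      show ?thesis
      proof (cases "xs p \<ge> x p")
        case ibad: True
        from claimI[OF Some ibad] have cI: "xs p = x p" "f (move x None j) = \<alpha>"
          "is_minimizer f (move xs (Some p) None)" by auto
        show ?thesis
        proof (cases "xs q \<le> x q")
          case True
          from claimJ[OF jq True] have "f (move x i None) = \<alpha>" by auto
          then have False using bothbad[OF Some jq] cI jq Some by auto
          then show ?thesis ..
        next
          case False
          define z where "z = move xs (Some p) None"
          have "dd x' z = dd x xs - \<bar>x p - xs p\<bar> - \<bar>x q - xs q\<bar> + \<bar>x' p - z p\<bar> + \<bar>x' q - z q\<bar>"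
            by (rule dd_two) (use pq in \<open>auto simp: z_def x' Some jq move_val\<close>)
          moreover have "z p = xs p - 1" "z q = xs q" using pq by (auto simp: z_def move_val)
          ultimately have "dd x' z < dd x xs" using x'p x'q cI False by arith
          then show ?thesis using cI z_def by blast
        qed
      next
        case igood: False
        show ?thesis
        proof (cases "xs q \<le> x q")
          case True
          from claimJ[OF jq True] have cJ: "xs q = x q" "is_minimizer f (move xs None (Some q))" by auto
          define z where "z = move xs None (Some q)"
          have "dd x' z = dd x xs - \<bar>x p - xs p\<bar> - \<bar>x q - xs q\<bar> + \<bar>x' p - z p\<bar> + \<bar>x' q - z q\<bar>"
            by (rule dd_two) (use pq in \<open>auto simp: z_def x' Some jq move_val\<close>)
          moreover have "z p = xs p" "z q = xs q + 1" using pq by (auto simp: z_def move_val)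
          ultimately have "dd x' z < dd x xs" using x'p x'q cJ igood by arith
          then show ?thesis using cJ z_def by blast
        next
          case False
          have "dd x' xs = dd x xs - \<bar>x p - xs p\<bar> - \<bar>x q - xs q\<bar> + \<bar>x' p - xs p\<bar> + \<bar>x' q - xs q\<bar>"
            by (rule dd_two) (use pq in \<open>auto simp: x' Some jq move_val\<close>)
          then have "dd x' xs < dd x xs" using x'p x'q igood False by arith
          then show ?thesis using xsm by blast
        qed
      qed
    qed
  qed
  then show ?thesis using xsn by fastforce
qed


lemma step_dom:
  assumes "bsd_step f x x'" "x \<in> domf f"
  shows "x' \<in> domf f"
proof -
  from assms(1) obtain i j where x': "x' = move x i j"
    and S: "\<forall>i' j'. f (move x i j) \<le> f (move x i' j')" and ns: "\<not> bsd_stop f x"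
    unfolding bsd_step_def by blast
  from ns obtain a b where "f (move x a b) < f x" unfolding bsd_stop_def by (auto simp: not_le)
  then have "f x' < f x" using S x' by (meson order_le_less_trans)
  then show ?thesis using assms(2) by (auto simp: domf_def)
qed

definition Phi :: "(('n::finite \<Rightarrow> int) \<Rightarrow> ereal) \<Rightarrow> ('n \<Rightarrow> int) \<Rightarrow> nat" where
  "Phi f x = (LEAST d. \<exists>y. is_minimizer f y \<and> d = nat (dd x y))"

lemma phi_dec:
  fixes f :: "('n::finite \<Rightarrow> int) \<Rightarrow> ereal"
  assumes ssqm: "SSQM_nat f" and xd: "x \<in> domf f" and st: "bsd_step f x x'"
    and ex: "is_minimizer f y0"
  shows "Phi f x' < Phi f x"
proof -
  obtain z where z: "is_minimizer f z" "\<forall>y. is_minimizer f y \<longrightarrow> dd x' z < dd x y"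
    using key[OF ssqm xd st ex] by blast
  have "Phi f x' \<le> nat (dd x' z)" unfolding Phi_def by (rule Least_le) (use z in blast)
  moreover obtain y where y: "is_minimizer f y" "Phi f x = nat (dd x y)"
    using LeastI_ex[of "\<lambda>d. \<exists>y. is_minimizer f y \<and> d = nat (dd x y)"] ex
    unfolding Phi_def by blast
  moreover have "dd x' z < dd x y" using z y by blast
  moreover have "dd x' z \<ge> 0" unfolding dd_def by (rule NN_nonneg)
  ultimately show ?thesis by linarith
qed

theorem corollary2p5:
  fixes f :: "('n::finite \<Rightarrow> int) \<Rightarrow> ereal"
    and x0 :: "'n \<Rightarrow> int"
  assumes no_minus_inf: "\<forall>x. f x \<noteq> - \<infinity>"
    and ssqm: "SSQM_nat f"
    and argmin_ne: "\<exists>x. is_minimizer f x"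
    and x0_dom: "x0 \<in> domf f"
  shows "\<not> (\<exists>xs. xs 0 = x0 \<and> (\<forall>k. bsd_step f (xs k) (xs (Suc k))))
       \<and> (\<forall>x. (bsd_step f)\<^sup>*\<^sup>* x0 x \<and> bsd_stop f x \<longrightarrow> is_minimizer f x)"
proof
  obtain y0 where y0: "is_minimizer f y0" using argmin_ne by blast
  show "\<not> (\<exists>xs. xs 0 = x0 \<and> (\<forall>k. bsd_step f (xs k) (xs (Suc k))))"
  proof
    assume "\<exists>xs. xs 0 = x0 \<and> (\<forall>k. bsd_step f (xs k) (xs (Suc k)))"
    then obtain xs where xs0: "xs 0 = x0" and st: "\<And>k. bsd_step f (xs k) (xs (Suc k))" by blast
    have dom: "xs k \<in> domf f" for k
      by (induction k) (use xs0 x0_dom step_dom st in auto)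
    have "Phi f (xs k) + k \<le> Phi f (xs 0)" for k
    proof (induction k)
      case 0 then show ?case by simp
    next
      case (Suc k)
      have "Phi f (xs (Suc k)) < Phi f (xs k)" by (rule phi_dec[OF ssqm dom st y0])
      then show ?case using Suc by linarith
    qed
    from this[of "Suc (Phi f (xs 0))"] show False by linarith
  qed
  show "\<forall>x. (bsd_step f)\<^sup>*\<^sup>* x0 x \<and> bsd_stop f x \<longrightarrow> is_minimizer f x"
  proof (intro allI impI)
    fix x assume h: "(bsd_step f)\<^sup>*\<^sup>* x0 x \<and> bsd_stop f x"
    have "x \<in> domf f" using h
    proof -
      have "(bsd_step f)\<^sup>*\<^sup>* x0 x" using h by blast
      then show ?thesis by (induction rule: rtranclp_induct) (use x0_dom step_dom in auto)
    qed
    then show "is_minimizer f x" using local_global[OF ssqm _ _ y0] h by blast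
  qed
qed

end
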